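(* Assume $p\in L_2(P_\eta)$ and let $n\in\mathbb N$. Then for $\lambda^n$-almost every $(y_1,\dots,y_n)\in B^n$, $$T_np(y_1,\dots,y_n)=\sum_{J\subset\{1,\dots,n\}}(-1)^{n-|J|}\,\mathbb E\,\lambda^*_{|J|}(\{y_j:j\in J\},\mu),$$ where $|J|$ denotes the cardinality of $J$.
   Context: $B\subset\mathbb R^d$ is a bounded Borel set with $|B|>0$; $\mathbf N$ is the space of finite integer-valued measures (finite point configurations) on $B$ with the $\sigma$-algebra generated by the maps $x\mapsto x(A)$, $A\subset B$ Borel. $\eta$ is a Poisson point process on $B$ with finite, atomless intensity measure $\lambda$ and distribution $P_\eta$. $\mu$ is a point process on $B$ with $dP_\mu=p\,dP_\eta$, $p:\mathbf N\to[0,\infty)$ measurable, $\int p\,dP_\eta=1$, and $p$ is hereditary: $p(x)>0$ implies $p(\tilde x)>0$ for every subconfiguration $\tilde x\subset x$. Difference operators: for a measurable $F:\mathbf N\to\mathbb R$ and $y\in B$, $D_yF(x)=F(x+\delta_y)-F(x)$; $D^0F=F$, $D^1_y=D_y$ and $D^n_{y_1,\dots,y_n}F=D_{y_1}D^{n-1}_{y_2,\dots,y_n}F$. Define $T_nF(y_1,\dots,y_n)=\mathbb E\,D^n_{y_1,\dots,y_n}F(\eta)$ (for the Poisson process $\eta$) and $T_0F=\mathbb E F(\eta)$. Conditional intensities: for $n\ge1$, $x\in\mathbf N$ and distinct $u_1,\dots,u_n\in B$ not in $x$, $\lambda^*_n(u_1,\dots,u_n,x)=p(x\cup\{u_1,\dots,u_n\})/p(x)$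 if $p(x)>0$ and $\lambda^*_n(u_1,\dots,u_n,x)=0$ if $p(x)=0$; $\lambda^*_0\equiv1$. The functions $\lambda^*_n$ are symmetric in $u_1,\dots,u_n$. *)

theory Defs
  imports "HOL-Probability.Probability" "HOL-Library.Multiset"
begin

text \<open>Finite point configurations on B are finite multisets of points of B
  (a finite integer-valued measure is a sum of Dirac masses).\<close>

definition configs :: "'a set \<Rightarrow> 'a multiset set" where
  "configs B = {x. set_mset x \<subseteq> B}"

definition cnt :: "'a multiset \<Rightarrow> 'a set \<Rightarrow> nat" where
  "cnt x A = size (filter_mset (\<lambda>y. y \<in> A) x)"

definition config_space :: "'a::topological_space set \<Rightarrow> 'a multiset measure" where
  "config_space B = sigma (configs B)
     {{x \<in> configs B. cnt x A = k} | A k. A \<in> sets borel \<and> A \<subseteq> B}"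

definition cfg_of :: "nat \<Rightarrow> (nat \<Rightarrow> 'a) \<Rightarrow> 'a multiset" where
  "cfg_of n f = mset (map f [0..<n])"

definition poisson_emeasure :: "'a::topological_space set \<Rightarrow> 'a measure \<Rightarrow> 'a multiset set \<Rightarrow> ennreal" where
  "poisson_emeasure B lam A =
     (\<Sum>n. ennreal (exp (- measure lam B) / fact n) *
        (\<integral>\<^sup>+ f. indicator A (cfg_of n f) \<partial>(PiM {..<n} (\<lambda>_. lam))))"

definition poisson_distr :: "'a::topological_space set \<Rightarrow> 'a measure \<Rightarrow> 'a multiset measure" where
  "poisson_distr B lam =
     measure_of (space (config_space B)) (sets (config_space B)) (poisson_emeasure B lam)"

fun diff_op :: "('a multiset \<Rightarrow> real) \<Rightarrow> 'a list \<Rightarrow> 'a multiset \<Rightarrow> real" where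
  "diff_op F [] = F"
| "diff_op F (y # ys) = (\<lambda>x. diff_op F ys (x + {#y#}) - diff_op F ys x)"

definition T_op :: "'a::topological_space set \<Rightarrow> 'a measure \<Rightarrow> ('a multiset \<Rightarrow> real) \<Rightarrow> nat \<Rightarrow> (nat \<Rightarrow> 'a) \<Rightarrow> real" where
  "T_op B lam F n y = (\<integral>x. diff_op F (map y [0..<n]) x \<partial>poisson_distr B lam)"

definition cond_int :: "('a multiset \<Rightarrow> real) \<Rightarrow> 'a multiset \<Rightarrow> 'a multiset \<Rightarrow> real" where
  "cond_int p u x = (if p x > 0 then p (x + u) / p x else 0)"

end

theory Submission
  imports Defs
begin


definition cfg :: "nat set \<Rightarrow> (nat \<Rightarrow> 'a) \<Rightarrow> 'a multiset" where
  "cfg I f = image_mset f (mset_set I)"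

lemma cfg_of_eq: "cfg_of n f = cfg {..<n} f"
  unfolding cfg_of_def cfg_def by (simp add: mset_map mset_upt atLeast0LessThan)

lemma cnt_plus[simp]: "cnt (x + y) A = cnt x A + cnt y A"
  by (simp add: cnt_def)

lemma cnt_cfg: "finite I \<Longrightarrow> cnt (cfg I f) A = (\<Sum>i\<in>I. indicator A (f i))"
  by (induct I rule: finite_induct) (auto simp: cnt_def cfg_def indicator_def)

lemma cfg_union: "finite I \<Longrightarrow> finite K \<Longrightarrow> I \<inter> K = {} \<Longrightarrow> cfg (I \<union> K) f = cfg I f + cfg K f"
  by (simp add: cfg_def mset_set_Union)

lemma cfg_cong: "(\<And>i. i \<in> I \<Longrightarrow> f i = g i) \<Longrightarrow> cfg I f = cfg I g"
  unfolding cfg_def by (rule image_mset_cong) (metis elem_mset_set empty_iff finite_set_mset_mset_set mset_set.infinite set_mset_empty)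

lemma space_config: "space (config_space B) = configs B"
  unfolding config_space_def by (simp add: space_measure_of_conv)

lemma sets_config: "sets (config_space B) = sigma_sets (configs B) {{x \<in> configs B. cnt x A = k} | A k. A \<in> sets borel \<and> A \<subseteq> B}"
  unfolding config_space_def by (rule sets_measure_of) auto

lemma config_gen: "A \<in> sets borel \<Longrightarrow> A \<subseteq> B \<Longrightarrow> {x \<in> configs B. cnt x A = k} \<in> sets (config_space B)"
  unfolding sets_config by (rule sigma_sets.Basic) blast

lemma measurable_config:
  assumes "\<And>x. x \<in> space M \<Longrightarrow> f x \<in> configs B"
    "\<And>A k. A \<in> sets borel \<Longrightarrow> A \<subseteq> B \<Longrightarrow> {x\<in>space M. cnt (f x) A = k} \<in> sets M"
  shows "f \<in> measurable M (config_space B)"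
  unfolding config_space_def
proof (rule measurable_measure_of)
  show "f \<in> space M \<rightarrow> configs B" using assms(1) by auto
  fix X assume "X \<in> {{x \<in> configs B. cnt x A = k} | A k. A \<in> sets borel \<and> A \<subseteq> B}"
  then obtain A k where X: "X = {x \<in> configs B. cnt x A = k}" "A \<in> sets borel" "A \<subseteq> B" by blast
  have "f -` X \<inter> space M = {x\<in>space M. cnt (f x) A = k}" using X assms(1) by auto
  then show "f -` X \<inter> space M \<in> sets M" using assms(2) X by simp
qed auto

lemma cnt_meas: "A \<in> sets borel \<Longrightarrow> A \<subseteq> B \<Longrightarrow> (\<lambda>x. cnt x A) \<in> measurable (config_space B) (count_space UNIV)"
proof (rule measurable_count_space_eq2_countable[THEN iffD2], safe)
  fix k :: nat assume "A \<in> sets borel" "A \<subseteq> B"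
  then have "{x \<in> configs B. cnt x A = k} \<in> sets (config_space B)" by (rule config_gen)
  moreover have "(\<lambda>x. cnt x A) -` {k} \<inter> space (config_space B) = {x \<in> configs B. cnt x A = k}"
    by (auto simp: space_config)
  ultimately show "(\<lambda>x. cnt x A) -` {k} \<inter> space (config_space B) \<in> sets (config_space B)" by simp
qed simp


lemma suminf_swap: "(\<Sum>i. \<Sum>n. f i n :: ennreal) = (\<Sum>n. \<Sum>i. f i n)"
proof -
  have "(\<Sum>i. \<Sum>n. f i n) = (\<Sum>i. \<integral>\<^sup>+ n. f i n \<partial>count_space UNIV)"
    by (simp add: nn_integral_count_space_nat)
  also have "\<dots> = (\<integral>\<^sup>+ n. (\<Sum>i. f i n) \<partial>count_space UNIV)"
    by (rule nn_integral_suminf[symmetric]) simp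
  also have "\<dots> = (\<Sum>n. \<Sum>i. f i n)"
    by (simp add: nn_integral_count_space_nat)
  finally show ?thesis .
qed

locale pp =
  fixes B :: "'a::euclidean_space set" and lam :: "'a measure"
  assumes B_borel: "B \<in> sets borel"
    and lam_space: "space lam = B"
    and lam_sets: "sets lam = sets (restrict_space borel B)"
    and lam_finite: "emeasure lam B < \<infinity>"
begin

abbreviation "N \<equiv> config_space B"
abbreviation "PP I \<equiv> PiM I (\<lambda>_. lam)"

lemma fin_lam: "finite_measure lam"
  by (rule finite_measureI) (use lam_finite lam_space in auto)

sublocale lam: finite_measure lam by (rule fin_lam)
sublocale prod: product_sigma_finite "\<lambda>_. lam" by standard

lemma sets_lamI: "A \<in> sets borel \<Longrightarrow> A \<subseteq> B \<Longrightarrow> A \<in> sets lam"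
  unfolding lam_sets using B_borel by (subst sets_restrict_space_iff) auto

lemma cnt_real_meas[measurable]: "A \<in> sets borel \<Longrightarrow> A \<subseteq> B \<Longrightarrow> (\<lambda>x. real (cnt x A)) \<in> borel_measurable N"
  using measurable_compose[OF cnt_meas[of A B], of real borel] by simp

lemma meas_cfg[measurable]: "finite I \<Longrightarrow> cfg I \<in> measurable (PP I) N"
proof (rule measurable_config)
  fix f assume "finite I" "f \<in> space (PP I)"
  then show "cfg I f \<in> configs B" by (auto simp: configs_def cfg_def space_PiM lam_space)
next
  fix A k assume A: "A \<in> sets borel" "A \<subseteq> B" and I: "finite I"
  have [measurable]: "A \<in> sets lam" using A by (rule sets_lamI)
  have "{x \<in> space (PP I). (\<Sum>i\<in>I. indicator A (x i) :: real) = real k} \<in> sets (PP I)"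
    by measurable
  moreover have "\<And>x. (\<Sum>i\<in>I. indicator A (x i) :: real) = real (\<Sum>i\<in>I. indicator A (x i) :: nat)"
    by (simp add: of_nat_sum indicator_def)
  ultimately show "{x \<in> space (PP I). cnt (cfg I x) A = k} \<in> sets (PP I)"
    using I by (simp add: cnt_cfg)
qed

lemma meas_plus[measurable]: "(\<lambda>z. fst z + snd z) \<in> measurable (N \<Otimes>\<^sub>M N) N"
proof (rule measurable_config)
  fix z assume "z \<in> space (N \<Otimes>\<^sub>M N)"
  then show "fst z + snd z \<in> configs B" by (auto simp: space_pair_measure space_config configs_def)
next
  fix A k assume A[measurable]: "A \<in> sets borel" "A \<subseteq> B"
  have "{z \<in> space (N \<Otimes>\<^sub>M N). real (cnt (fst z) A) + real (cnt (snd z) A) = real k} \<in> sets (N \<Otimes>\<^sub>M N)"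
    by measurable
  then show "{z \<in> space (N \<Otimes>\<^sub>M N). cnt (fst z + snd z) A = k} \<in> sets (N \<Otimes>\<^sub>M N)"
    by (simp flip: of_nat_add)
qed


lemma meas_add[measurable]: "f \<in> measurable M N \<Longrightarrow> g \<in> measurable M N \<Longrightarrow> (\<lambda>x. f x + g x) \<in> measurable M N"
  using measurable_compose[OF measurable_Pair meas_plus] by simp

definition "w n = exp (- measure lam B) / fact n"

abbreviation "P \<equiv> poisson_distr B lam"

lemma pe_int: "poisson_emeasure B lam A = (\<Sum>n. ennreal (w n) * (\<integral>\<^sup>+ f. indicator A (cfg {..<n} f) \<partial>PP {..<n}))"
  unfolding poisson_emeasure_def w_def cfg_of_eq ..

lemma ca: "countably_additive (sets N) (poisson_emeasure B lam)"
proof (rule countably_additiveI)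
  fix F :: "nat \<Rightarrow> _" assume F: "range F \<subseteq> sets N" "disjoint_family F" "\<Union>(range F) \<in> sets N"
  have "(\<Sum>i. poisson_emeasure B lam (F i)) = (\<Sum>i. \<Sum>n. ennreal (w n) * (\<integral>\<^sup>+ f. indicator (F i) (cfg {..<n} f) \<partial>PP {..<n}))"
    by (simp add: pe_int)
  also have "\<dots> = (\<Sum>n. \<Sum>i. ennreal (w n) * (\<integral>\<^sup>+ f. indicator (F i) (cfg {..<n} f) \<partial>PP {..<n}))"
    by (rule suminf_swap)
  also have "\<dots> = (\<Sum>n. ennreal (w n) * (\<integral>\<^sup>+ f. (\<Sum>i. indicator (F i) (cfg {..<n} f)) \<partial>PP {..<n}))"
  proof (intro suminf_cong)
    fix n
    have [measurable]: "F i \<in> sets N" for i using F by auto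
    show "(\<Sum>i. ennreal (w n) * (\<integral>\<^sup>+ f. indicator (F i) (cfg {..<n} f) \<partial>PP {..<n})) =
        ennreal (w n) * (\<integral>\<^sup>+ f. (\<Sum>i. indicator (F i) (cfg {..<n} f)) \<partial>PP {..<n})"
      by (subst nn_integral_suminf) auto
  qed
  also have "\<dots> = poisson_emeasure B lam (\<Union>(range F))"
    by (simp add: pe_int suminf_indicator[OF F(2)])
  finally show "(\<Sum>i. poisson_emeasure B lam (F i)) = poisson_emeasure B lam (\<Union>(range F))" .
qed

lemma sets_P[measurable_cong]: "sets P = sets N"
  unfolding poisson_distr_def by (simp add: sets.space_closed sets.sigma_sets_eq)

lemma space_P: "space P = configs B"
  unfolding poisson_distr_def by (simp add: space_measure_of_conv space_config)

lemma emeasure_P: "A \<in> sets N \<Longrightarrow> emeasure P A = poisson_emeasure B lam A"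
  unfolding poisson_distr_def
proof (rule emeasure_measure_of_sigma)
  show "sigma_algebra (space N) (sets N)" by (rule sets.sigma_algebra_axioms)
  show "positive (sets N) (poisson_emeasure B lam)"
    by (simp add: positive_def pe_int)
qed (use ca in auto)

lemma nn_P:
  assumes g: "g \<in> borel_measurable N"
  shows "(\<integral>\<^sup>+ x. g x \<partial>P) = (\<Sum>n. ennreal (w n) * (\<integral>\<^sup>+ f. g (cfg {..<n} f) \<partial>PP {..<n}))"
  using g
proof (induct rule: borel_measurable_induct)
  case (cong f g)
  have "(\<integral>\<^sup>+ x. f x \<partial>P) = (\<integral>\<^sup>+ x. g x \<partial>P)"
    using cong by (intro nn_integral_cong) (simp add: space_P space_config)
  moreover have "(\<integral>\<^sup>+ x. f (cfg {..<n} x) \<partial>PP {..<n}) = (\<integral>\<^sup>+ x. g (cfg {..<n} x) \<partial>PP {..<n})" for n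
    using cong by (intro nn_integral_cong) (simp add: measurable_space[OF meas_cfg])
  ultimately show ?case using cong by simp
next
  case (set A)
  then show ?case
    by (simp add: emeasure_P pe_int measurable_cong_sets[OF sets_P refl] flip: nn_integral_indicator[of A P])
next
  case (mult u c)
  have [measurable]: "u \<in> borel_measurable P" using mult by (simp add: measurable_cong_sets[OF sets_P refl])
  show ?case using mult
    by (simp add: nn_integral_cmult mult.left_commute[of c] ennreal_suminf_cmult[symmetric] del: ennreal_suminf_cmult)
next
  case (add u v)
  have [measurable]: "u \<in> borel_measurable P" "v \<in> borel_measurable P"
    using add by (simp_all add: measurable_cong_sets[OF sets_P refl])
  show ?case using add
    by (simp add: nn_integral_add distrib_left suminf_add[symmetric])
next
  case (seq U)
  have [measurable]: "U i \<in> borel_measurable P" for i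
    using seq by (simp_all add: measurable_cong_sets[OF sets_P refl])
  have inc: "incseq (\<lambda>i. U i (cfg {..<n} f))" for n f
    using seq(4) by (auto simp: incseq_def le_fun_def)
  have "(\<integral>\<^sup>+ x. (SUP i. U i) x \<partial>P) = (\<integral>\<^sup>+ x. (SUP i. U i x) \<partial>P)"
    by (simp add: image_comp)
  also have "\<dots> = (SUP i. \<integral>\<^sup>+ x. U i x \<partial>P)"
    using seq(4) by (intro nn_integral_monotone_convergence_SUP) (auto simp: incseq_def le_fun_def)
  also have "\<dots> = (SUP i. \<Sum>n. ennreal (w n) * (\<integral>\<^sup>+ f. U i (cfg {..<n} f) \<partial>PP {..<n}))"
    using seq by simp
  also have "\<dots> = (\<Sum>n. SUP i. ennreal (w n) * (\<integral>\<^sup>+ f. U i (cfg {..<n} f) \<partial>PP {..<n}))"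
  proof (rule ennreal_suminf_SUP_eq[symmetric])
    fix n show "incseq (\<lambda>i. ennreal (w n) * (\<integral>\<^sup>+ f. U i (cfg {..<n} f) \<partial>PP {..<n}))"
      using inc by (auto simp: incseq_def intro!: mult_left_mono nn_integral_mono)
  qed
  also have "\<dots> = (\<Sum>n. ennreal (w n) * (\<integral>\<^sup>+ f. (SUP i. U i) (cfg {..<n} f) \<partial>PP {..<n}))"
  proof (intro suminf_cong)
    fix n
    have "(\<integral>\<^sup>+ f. (SUP i. U i) (cfg {..<n} f) \<partial>PP {..<n}) = (\<integral>\<^sup>+ f. (SUP i. U i (cfg {..<n} f)) \<partial>PP {..<n})"
      by (simp add: image_comp)
    also have "\<dots> = (SUP i. \<integral>\<^sup>+ f. U i (cfg {..<n} f) \<partial>PP {..<n})"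
      using seq inc by (intro nn_integral_monotone_convergence_SUP) (auto simp: incseq_def le_fun_def)
    finally show "(SUP i. ennreal (w n) * (\<integral>\<^sup>+ f. U i (cfg {..<n} f) \<partial>PP {..<n})) =
         ennreal (w n) * (\<integral>\<^sup>+ f. (SUP i. U i) (cfg {..<n} f) \<partial>PP {..<n})"
      by (simp add: SUP_mult_left_ennreal)
  qed
  finally show ?case .
qed


lemma space_PP: "space (PP I) = PiE I (\<lambda>_. B)"
  by (simp add: space_PiM lam_space)

lemma distr_reindex:
  assumes K: "finite K" and f: "bij_betw f I K"
  shows "distr (PP K) (PP I) (\<lambda>y. \<lambda>i\<in>I. y (f i)) = PP I"
proof -
  have I: "finite I" using f K bij_betw_finite by blast
  have fI: "i \<in> I \<Longrightarrow> f i \<in> K" for i using f by (auto simp: bij_betw_def)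
  have tm: "(\<lambda>y. \<lambda>i\<in>I. y (f i)) \<in> measurable (PP K) (PP I)"
    by (rule measurable_restrict) (auto intro: measurable_component_singleton fI)
  let ?g = "inv_into I f"
  show ?thesis
  proof (rule prod.PiM_eqI[OF I])
    show "sets (distr (PP K) (PP I) (\<lambda>y. \<lambda>i\<in>I. y (f i))) = sets (PP I)" by simp
    fix A assume A: "\<And>i. i \<in> I \<Longrightarrow> A i \<in> sets lam"
    have AB: "i \<in> I \<Longrightarrow> A i \<subseteq> B" for i using sets.sets_into_space[OF A] lam_space by auto
    have gK: "k \<in> K \<Longrightarrow> ?g k \<in> I" "k \<in> K \<Longrightarrow> f (?g k) = k" for k
      using f by (auto simp: bij_betw_def inv_into_into f_inv_into_f)
    have gf: "i \<in> I \<Longrightarrow> ?g (f i) = i" for i using f by (auto simp: bij_betw_def)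
    have "(\<lambda>y. \<lambda>i\<in>I. y (f i)) -` PiE I A \<inter> space (PP K) = PiE K (\<lambda>k. A (?g k))"
    proof (intro set_eqI iffI)
      fix y assume "y \<in> (\<lambda>y. \<lambda>i\<in>I. y (f i)) -` PiE I A \<inter> space (PP K)"
      then show "y \<in> PiE K (\<lambda>k. A (?g k))" using gK by (auto simp: space_PP PiE_iff) metis
    next
      fix y assume "y \<in> PiE K (\<lambda>k. A (?g k))"
      then show "y \<in> (\<lambda>y. \<lambda>i\<in>I. y (f i)) -` PiE I A \<inter> space (PP K)"
        using gK gf fI AB by (fastforce simp: space_PP PiE_iff)
    qed
    then have "emeasure (distr (PP K) (PP I) (\<lambda>y. \<lambda>i\<in>I. y (f i))) (PiE I A) =
        emeasure (PP K) (PiE K (\<lambda>k. A (?g k)))"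
      using tm A by (simp add: emeasure_distr sets_PiM_I_finite I)
    also have "\<dots> = (\<Prod>k\<in>K. emeasure lam (A (?g k)))"
      using K A gK by (simp add: prod.emeasure_PiM)
    also have "\<dots> = (\<Prod>i\<in>I. emeasure lam (A i))"
      using prod.reindex_bij_betw[OF f, of "\<lambda>k. emeasure lam (A (?g k))"] gf by simp
    finally show "emeasure (distr (PP K) (PP I) (\<lambda>y. \<lambda>i\<in>I. y (f i))) (PiE I A) = (\<Prod>i\<in>I. emeasure lam (A i))" .
  qed
qed

lemma nn_reindex:
  assumes K: "finite K" and f: "bij_betw f I K" and h[measurable]: "h \<in> borel_measurable N"
  shows "(\<integral>\<^sup>+ x. h (cfg I x) \<partial>PP I) = (\<integral>\<^sup>+ y. h (cfg K y) \<partial>PP K)"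
proof -
  have I: "finite I" using f K bij_betw_finite by blast
  have fI: "i \<in> I \<Longrightarrow> f i \<in> K" for i using f by (auto simp: bij_betw_def)
  have tm: "(\<lambda>y. \<lambda>i\<in>I. y (f i)) \<in> measurable (PP K) (PP I)"
    by (rule measurable_restrict) (auto intro: measurable_component_singleton fI)
  have "(\<integral>\<^sup>+ x. h (cfg I x) \<partial>PP I) = (\<integral>\<^sup>+ x. h (cfg I x) \<partial>distr (PP K) (PP I) (\<lambda>y. \<lambda>i\<in>I. y (f i)))"
    by (simp add: distr_reindex[OF K f])
  also have "\<dots> = (\<integral>\<^sup>+ y. h (cfg I (\<lambda>i\<in>I. y (f i))) \<partial>PP K)"
    using I by (intro nn_integral_distr tm) measurable
  also have "\<dots> = (\<integral>\<^sup>+ y. h (cfg K y) \<partial>PP K)"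
  proof (intro nn_integral_cong arg_cong[where f=h])
    fix y
    have "cfg I (\<lambda>i\<in>I. y (f i)) = cfg I (\<lambda>i. y (f i))" by (rule cfg_cong) simp
    also have "\<dots> = image_mset y (image_mset f (mset_set I))" by (simp add: cfg_def multiset.map_comp o_def)
    also have "\<dots> = cfg K y" using f by (simp add: image_mset_mset_set bij_betw_def cfg_def)
    finally show "cfg I (\<lambda>i\<in>I. y (f i)) = cfg K y" .
  qed
  finally show ?thesis .
qed

lemma nn_reindex_card:
  assumes I: "finite I" and h[measurable]: "h \<in> borel_measurable N"
  shows "(\<integral>\<^sup>+ x. h (cfg I x) \<partial>PP I) = (\<integral>\<^sup>+ y. h (cfg {..<card I} y) \<partial>PP {..<card I})"
proof -
  obtain f where "bij_betw f I {..<card I}"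
    using I by (metis ex_bij_betw_finite_nat bij_betw_inv lessThan_atLeast0 atLeast0LessThan)
  then show ?thesis by (intro nn_reindex) auto
qed

lemma nn_fold:
  assumes IK: "I \<inter> K = {}" "finite I" "finite K" and h[measurable]: "h \<in> borel_measurable N"
  shows "(\<integral>\<^sup>+ z. h (cfg (I \<union> K) z) \<partial>PP (I \<union> K)) = (\<integral>\<^sup>+ x. \<integral>\<^sup>+ y. h (cfg I x + cfg K y) \<partial>PP K \<partial>PP I)"
proof -
  have "(\<integral>\<^sup>+ z. h (cfg (I \<union> K) z) \<partial>PP (I \<union> K)) = (\<integral>\<^sup>+ x. \<integral>\<^sup>+ y. h (cfg (I \<union> K) (merge I K (x, y))) \<partial>PP K \<partial>PP I)"
    using IK by (intro prod.product_nn_integral_fold) auto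
  also have "\<dots> = (\<integral>\<^sup>+ x. \<integral>\<^sup>+ y. h (cfg I x + cfg K y) \<partial>PP K \<partial>PP I)"
  proof (intro nn_integral_cong arg_cong[where f=h])
    fix x y
    have "cfg (I \<union> K) (merge I K (x, y)) = cfg I (merge I K (x, y)) + cfg K (merge I K (x, y))"
      using IK by (simp add: cfg_union)
    also have "cfg I (merge I K (x, y)) = cfg I x" by (rule cfg_cong) (simp add: merge_def)
    also have "cfg K (merge I K (x, y)) = cfg K y" using IK by (intro cfg_cong) (auto simp: merge_def)
    finally show "cfg (I \<union> K) (merge I K (x, y)) = cfg I x + cfg K y" .
  qed
  finally show ?thesis .
qed

lemma emeasure_space_PP: "finite I \<Longrightarrow> emeasure (PP I) (space (PP I)) = emeasure lam B ^ card I"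
  using prod.emeasure_PiM[of I "\<lambda>_. B"] by (simp add: space_PP lam_space sets.top[of lam, unfolded lam_space])

lemma nn_marg:
  assumes J: "J \<subseteq> I" "finite I" and g[measurable]: "g \<in> borel_measurable (PP J)"
  shows "(\<integral>\<^sup>+ x. g (restrict x J) \<partial>PP I) = emeasure lam B ^ card (I - J) * (\<integral>\<^sup>+ x. g x \<partial>PP J)"
proof -
  have fin: "finite J" "finite (I - J)" using J finite_subset by auto
  have U: "J \<union> (I - J) = I" using J by auto
  have "(\<integral>\<^sup>+ x. g (restrict x J) \<partial>PP I) = (\<integral>\<^sup>+ x. \<integral>\<^sup>+ y. g (restrict (merge J (I - J) (x, y)) J) \<partial>PP (I - J) \<partial>PP J)"
    using prod.product_nn_integral_fold[of J "I - J" "\<lambda>x. g (restrict x J)"] fin U by simp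
  also have "\<dots> = (\<integral>\<^sup>+ x. \<integral>\<^sup>+ y. g x \<partial>PP (I - J) \<partial>PP J)"
    by (intro nn_integral_cong) (auto simp: space_PiM)
  also have "\<dots> = (\<integral>\<^sup>+ x. g x * emeasure lam B ^ card (I - J) \<partial>PP J)"
    using fin by (simp add: emeasure_space_PP)
  also have "\<dots> = emeasure lam B ^ card (I - J) * (\<integral>\<^sup>+ x. g x \<partial>PP J)"
    by (simp add: nn_integral_multc mult.commute)
  finally show ?thesis .
qed


lemma meas_cfg_sub: "finite J \<Longrightarrow> J \<subseteq> I \<Longrightarrow> cfg J \<in> measurable (PP I) N"
proof -
  assume J: "finite J" "J \<subseteq> I"
  have "(\<lambda>x. cfg J (restrict x J)) \<in> measurable (PP I) N"
    using measurable_compose[OF measurable_restrict_subset[OF J(2)] meas_cfg[OF J(1)]] by simp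
  moreover have eq: "cfg J (restrict x J) = cfg J x" for x by (rule cfg_cong) simp
  ultimately show ?thesis by (simp add: eq)
qed

lemma cfg_space: "y \<in> space (PP I) \<Longrightarrow> J \<subseteq> I \<Longrightarrow> cfg J y \<in> space N"
  by (auto simp: space_config configs_def cfg_def space_PP PiE_iff)
    (metis elem_mset_set empty_iff finite_set_mset_mset_set mset_set.infinite set_mset_empty subsetD)

definition "c = measure lam B"

lemma emeasure_lamB: "emeasure lam B = ennreal c"
  unfolding c_def using lam.emeasure_eq_measure[of B] .

lemma c_nonneg: "0 \<le> c" unfolding c_def by simp

lemma w_nonneg: "0 \<le> w n" unfolding w_def by simp

lemma w_alt: "w n = exp (- c) * inverse (fact n)" unfolding w_def c_def by (simp add: field_simps)

lemma summable_wpow: "summable (\<lambda>n. w n * x ^ n)"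
  unfolding w_alt using summable_mult[OF summable_exp[of x], of "exp (-c)"] by (simp add: mult.assoc)

lemma P_finite: "emeasure P (space P) \<noteq> \<infinity>"
proof -
  have sP: "space P \<in> sets N" by (metis sets.top sets_P)
  have ind: "(\<integral>\<^sup>+ f. indicator (space P) (cfg {..<n} f) \<partial>PP{..<n}) = emeasure (PP{..<n}) (space (PP{..<n}))" for n
  proof -
    have "(\<integral>\<^sup>+ f. indicator (space P) (cfg {..<n} f) \<partial>PP{..<n}) = (\<integral>\<^sup>+ f. 1 \<partial>PP{..<n})"
    proof (rule nn_integral_cong)
      fix f assume "f \<in> space (PP {..<n})"
      then have "cfg {..<n} f \<in> space P" using cfg_space[of f "{..<n}" "{..<n}"] by (simp add: space_P space_config)
      then show "indicator (space P) (cfg {..<n} f) = (1::ennreal)" by simp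
    qed
    then show ?thesis by simp
  qed
  have "emeasure P (space P) = (\<Sum>n. ennreal (w n) * emeasure (PP {..<n}) (space (PP {..<n})))"
    unfolding emeasure_P[OF sP] pe_int ind ..
  also have "\<dots> = (\<Sum>n. ennreal (w n * c ^ n))"
    by (intro suminf_cong) (simp add: emeasure_space_PP emeasure_lamB ennreal_mult ennreal_power w_nonneg c_nonneg)
  also have "\<dots> \<noteq> \<infinity>"
    unfolding infinity_ennreal_def
    by (rule ennreal_suminf_neq_top[OF summable_wpow]) (intro mult_nonneg_nonneg w_nonneg zero_le_power c_nonneg)
  finally show ?thesis .
qed

sublocale P: finite_measure P by (rule finite_measureI[OF P_finite])

end

lemma fact_le: "fact (m + k) \<le> (real (m + k)) ^ k * fact m"
proof (induct k)
  case (Suc k)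
  have "fact (m + Suc k) = real (m + Suc k) * fact (m + k)" by (simp add: algebra_simps)
  also have "\<dots> \<le> real (m + Suc k) * ((real (m + k)) ^ k * fact m)"
    using Suc by (intro mult_left_mono) auto
  also have "\<dots> \<le> real (m + Suc k) * ((real (m + Suc k)) ^ k * fact m)"
    by (intro mult_left_mono mult_right_mono power_mono) auto
  finally show ?case by (simp add: algebra_simps)
qed simp

lemma mt_le: "0 \<le> t \<Longrightarrow> 0 \<le> (M::real) \<Longrightarrow> M * t \<le> M^2 + t^2"
proof -
  assume a: "0 \<le> t" "0 \<le> M"
  have "0 \<le> (M - t)^2" by simp
  moreover have "0 \<le> M * t" using a by simp
  ultimately show ?thesis by (simp add: power2_eq_square algebra_simps)
qed

lemma suminf_shift_le: "(\<Sum>m. f (m + k) :: ennreal) \<le> (\<Sum>n. f n)"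
proof (rule suminf_le_const[OF summableI])
  fix M
  have "(\<Sum>m<M. f (m + k)) = (\<Sum>n\<in>(\<lambda>m. m + k) ` {..<M}. f n)"
    by (simp add: sum.reindex)
  also have "\<dots> \<le> suminf f"
    by (intro sum_le_suminf[OF summableI]) auto
  finally show "(\<Sum>m<M. f (m + k)) \<le> suminf f" .
qed



context pp begin

lemma sf_PP: "finite I \<Longrightarrow> sigma_finite_measure (PP I)"
proof -
  assume "finite I"
  then interpret finite_product_sigma_finite "\<lambda>_. lam" I
    by (simp add: finite_product_sigma_finite_def finite_product_sigma_finite_axioms_def prod.product_sigma_finite_axioms)
  show ?thesis by (rule sigma_finite_measure_axioms)
qed

end

locale pp2 = pp +
  fixes p :: "'a multiset \<Rightarrow> real"
  assumes p_meas[measurable]: "p \<in> borel_measurable N"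
    and p_nonneg: "\<And>x. x \<in> space N \<Longrightarrow> p x \<ge> 0"
    and p_L2: "integrable P (\<lambda>x. (p x)^2)"
begin

definition "a M = (\<integral>\<^sup>+ z. ennreal (p (cfg {..<M} z)) \<partial>PP {..<M})"
definition "b M = (\<integral>\<^sup>+ z. ennreal ((p (cfg {..<M} z))^2) \<partial>PP {..<M})"

lemma b_sum: "(\<Sum>M. ennreal (w M) * b M) < \<infinity>"
proof -
  have "(\<integral>\<^sup>+ x. ennreal (norm ((p x)^2)) \<partial>P) < \<infinity>"
    using p_L2 by (simp add: integrable_iff_bounded)
  then have "(\<integral>\<^sup>+ x. ennreal ((p x)^2) \<partial>P) < \<infinity>" by simp
  then show ?thesis by (simp add: nn_P b_def)
qed

lemma a_bound: "ennreal (real M ^ k) * a M \<le> ennreal (real M ^ (2*k) * c ^ M) + b M"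
proof -
  have "ennreal (real M ^ k) * a M = (\<integral>\<^sup>+ z. ennreal (real M ^ k * p (cfg {..<M} z)) \<partial>PP {..<M})"
    unfolding a_def by (simp add: nn_integral_cmult[symmetric] ennreal_mult')
  also have "\<dots> \<le> (\<integral>\<^sup>+ z. ennreal (real M ^ (2*k)) + ennreal ((p (cfg {..<M} z))^2) \<partial>PP {..<M})"
  proof (intro nn_integral_mono)
    fix z assume "z \<in> space (PP {..<M})"
    then have "0 \<le> p (cfg {..<M} z)" using cfg_space[of z "{..<M}" "{..<M}"] p_nonneg by simp
    then have "real M ^ k * p (cfg {..<M} z) \<le> (real M ^ k)^2 + (p (cfg {..<M} z))^2"
      by (intro mt_le) auto
    then show "ennreal (real M ^ k * p (cfg {..<M} z)) \<le> ennreal (real M ^ (2*k)) + ennreal ((p (cfg {..<M} z))^2)"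
      by (simp add: ennreal_plus[symmetric] power_mult[symmetric] mult.commute del: ennreal_plus)
  qed
  also have "\<dots> = ennreal (real M ^ (2*k)) * emeasure (PP {..<M}) (space (PP {..<M})) + b M"
    unfolding b_def by (subst nn_integral_add) auto
  also have "\<dots> = ennreal (real M ^ (2*k) * c ^ M) + b M"
    by (simp add: emeasure_space_PP emeasure_lamB ennreal_mult ennreal_power c_nonneg)
  finally show ?thesis .
qed

lemma w_le: "w m \<le> w (m + k) * real (m + k) ^ k"
proof -
  have "fact (m + k) \<le> real (m + k) ^ k * fact m" by (rule fact_le)
  then have "inverse (fact m) \<le> real (m + k) ^ k * inverse (fact (m + k) :: real)"
    by (simp add: field_simps)
  then show ?thesis unfolding w_alt
    by (simp add: mult.assoc mult.commute mult.left_commute)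
qed

definition "g k M = ennreal (w M * real M ^ (2*k) * c ^ M) + ennreal (w M) * b M"

lemma term_bound: "ennreal (w m) * a (m + k) \<le> g k (m + k)"
proof -
  have "ennreal (w m) * a (m + k) \<le> ennreal (w (m + k) * real (m + k) ^ k) * a (m + k)"
    by (intro mult_right_mono ennreal_leI w_le) simp
  also have "\<dots> = ennreal (w (m + k)) * (ennreal (real (m + k) ^ k) * a (m + k))"
    by (simp add: ennreal_mult w_nonneg mult.assoc)
  also have "\<dots> \<le> ennreal (w (m + k)) * (ennreal (real (m + k) ^ (2*k) * c ^ (m + k)) + b (m + k))"
    by (intro mult_left_mono a_bound) simp
  also have "\<dots> = g k (m + k)"
  proof -
    have "ennreal (w (m + k)) * ennreal (real (m + k) ^ (2*k) * c ^ (m + k)) = ennreal (w (m + k) * real (m + k) ^ (2*k) * c ^ (m + k))"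
      by (subst mult.assoc, rule ennreal_mult'[OF w_nonneg, symmetric])
    then show ?thesis unfolding g_def by (simp add: distrib_left)
  qed
  finally show ?thesis .
qed

lemma pow_sum: "(\<Sum>M. ennreal (w M * real M ^ (2*k) * c ^ M)) < \<infinity>"
proof -
  have "(\<Sum>M. ennreal (w M * real M ^ (2*k) * c ^ M)) \<le> (\<Sum>M. ennreal (w M * (2 ^ (2*k) * c) ^ M))"
  proof (intro suminf_le summableI ennreal_leI)
    fix M
    have "real M < real (2 ^ M)" using less_exp[of M] by (simp only: of_nat_less_iff)
    then have "real M \<le> 2 ^ M" by simp
    then have "real M ^ (2*k) \<le> (2 ^ M) ^ (2*k)"
      by (intro power_mono) auto
    also have "\<dots> = (2 ^ (2*k)) ^ M" by (metis power_mult mult.commute)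
    finally have "real M ^ (2*k) \<le> (2 ^ (2*k)) ^ M" .
    then have "w M * real M ^ (2*k) * c ^ M \<le> w M * (2 ^ (2*k)) ^ M * c ^ M"
      by (intro mult_right_mono mult_left_mono w_nonneg) (auto simp: c_nonneg)
    then show "w M * real M ^ (2*k) * c ^ M \<le> w M * (2 ^ (2*k) * c) ^ M"
      by (simp add: power_mult_distrib mult.assoc)
  qed
  also have "\<dots> < \<infinity>"
    unfolding infinity_ennreal_def less_top[symmetric]
    by (rule ennreal_suminf_neq_top[OF summable_wpow]) (intro mult_nonneg_nonneg w_nonneg zero_le_power c_nonneg, simp)
  finally show ?thesis .
qed

lemma main_sum_finite: "(\<Sum>m. ennreal (w m) * a (m + k)) < \<infinity>"
proof -
  have "(\<Sum>m. ennreal (w m) * a (m + k)) \<le> (\<Sum>m. g k (m + k))"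
    by (intro suminf_le summableI term_bound)
  also have "\<dots> \<le> (\<Sum>M. g k M)" by (rule suminf_shift_le)
  also have "\<dots> = (\<Sum>M. ennreal (w M * real M ^ (2*k) * c ^ M)) + (\<Sum>M. ennreal (w M) * b M)"
    unfolding g_def by (rule suminf_add[symmetric]) (auto intro: summableI)
  also have "\<dots> < \<infinity>" using pow_sum b_sum by (simp add: ennreal_add_less_top)
  finally show ?thesis .
qed


lemma meas_shift: "u \<in> space N \<Longrightarrow> (\<lambda>z. z + u) \<in> measurable N N"
  by (rule meas_add[OF measurable_ident_sets[OF refl] measurable_const])

lemma inner_eq:
  assumes J: "J \<subseteq> {..<n}"
  shows "(\<integral>\<^sup>+ y. (\<integral>\<^sup>+ f. ennreal (p (cfg {..<m} f + cfg J y)) \<partial>PP {..<m}) \<partial>PP {..<n})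
       = emeasure lam B ^ (n - card J) * a (m + card J)"
proof -
  define K where "K = {n..<n+m}"
  have finJ: "finite J" using J finite_subset by blast
  have finK: "finite K" by (simp add: K_def)
  have JK: "J \<inter> K = {}" using J by (auto simp: K_def)
  have bij: "bij_betw (\<lambda>i. n + i) {..<m} K"
    unfolding K_def bij_betw_def
  proof
    show "inj_on ((+) n) {..<m}" by simp
    show "(+) n ` {..<m} = {n..<n + m}"
    proof (intro set_eqI iffI)
      fix x assume "x \<in> {n..<n + m}" then show "x \<in> (+) n ` {..<m}" by (intro image_eqI[of _ _ "x - n"]) auto
    qed auto
  qed
  have [measurable]: "cfg J \<in> measurable (PP {..<n}) N" using finJ J by (rule meas_cfg_sub)
  have [measurable]: "cfg J \<in> measurable (PP J) N" "cfg K \<in> measurable (PP K) N"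
    using finJ finK by (auto intro: meas_cfg)
  interpret sK: sigma_finite_measure "PP K" using finK by (rule sf_PP)
  define G where "G y = (\<integral>\<^sup>+ f. ennreal (p (cfg K f + cfg J y)) \<partial>PP K)" for y
  have Gm[measurable]: "G \<in> borel_measurable (PP J)" unfolding G_def by measurable
  have "(\<integral>\<^sup>+ y. (\<integral>\<^sup>+ f. ennreal (p (cfg {..<m} f + cfg J y)) \<partial>PP {..<m}) \<partial>PP {..<n})
      = (\<integral>\<^sup>+ y. G (restrict y J) \<partial>PP {..<n})"
  proof (intro nn_integral_cong)
    fix y assume y: "y \<in> space (PP {..<n})"
    have [measurable]: "(\<lambda>z. z + cfg J y) \<in> measurable N N" using cfg_space[OF y J] by (rule meas_shift)
    have "(\<integral>\<^sup>+ f. ennreal (p (cfg {..<m} f + cfg J y)) \<partial>PP {..<m}) = (\<integral>\<^sup>+ f. ennreal (p (cfg K f + cfg J y)) \<partial>PP K)"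
      by (rule nn_reindex[OF finK bij, of "\<lambda>z. ennreal (p (z + cfg J y))"]) measurable
    also have "\<dots> = G (restrict y J)"
      unfolding G_def by (intro nn_integral_cong arg_cong[where f="\<lambda>u. ennreal (p (_ + u))"] cfg_cong) simp
    finally show "(\<integral>\<^sup>+ f. ennreal (p (cfg {..<m} f + cfg J y)) \<partial>PP {..<m}) = G (restrict y J)" .
  qed
  also have "\<dots> = emeasure lam B ^ card ({..<n} - J) * (\<integral>\<^sup>+ y. G y \<partial>PP J)"
    using J by (intro nn_marg) auto
  also have "(\<integral>\<^sup>+ y. G y \<partial>PP J) = (\<integral>\<^sup>+ z. ennreal (p (cfg (J \<union> K) z)) \<partial>PP (J \<union> K))"
    unfolding G_def using nn_fold[OF JK finJ finK, of "\<lambda>z. ennreal (p z)"] by (simp add: add.commute)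
  also have "\<dots> = a (card (J \<union> K))"
    unfolding a_def using finJ finK by (intro nn_reindex_card) auto
  also have "card (J \<union> K) = m + card J" using JK finJ finK by (simp add: card_Un_disjoint K_def)
  also have "card ({..<n} - J) = n - card J" using J finJ by (simp add: card_Diff_subset)
  finally show ?thesis .
qed

lemma Phi_meas:
  assumes J: "J \<subseteq> {..<n}"
  shows "(\<lambda>y. \<integral>\<^sup>+ x. ennreal (p (x + cfg J y)) \<partial>P) \<in> borel_measurable (PP {..<n})"
proof -
  have finJ: "finite J" using J finite_subset by blast
  have [measurable]: "cfg J \<in> measurable (PP {..<n}) N" using finJ J by (rule meas_cfg_sub)
  show ?thesis by measurable
qed

lemma Phi_int:
  assumes J: "J \<subseteq> {..<n}"
  shows "(\<integral>\<^sup>+ y. (\<integral>\<^sup>+ x. ennreal (p (x + cfg J y)) \<partial>P) \<partial>PP {..<n}) < \<infinity>"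
proof -
  have finJ: "finite J" using J finite_subset by blast
  have [measurable]: "cfg J \<in> measurable (PP {..<n}) N" using finJ J by (rule meas_cfg_sub)
  have im[measurable]: "(\<lambda>y. \<integral>\<^sup>+ f. ennreal (p (cfg {..<m} f + cfg J y)) \<partial>PP {..<m}) \<in> borel_measurable (PP {..<n})" for m
    by (rule sigma_finite_measure.borel_measurable_nn_integral[OF sf_PP]) measurable
  have "(\<integral>\<^sup>+ y. (\<integral>\<^sup>+ x. ennreal (p (x + cfg J y)) \<partial>P) \<partial>PP {..<n})
     = (\<integral>\<^sup>+ y. (\<Sum>m. ennreal (w m) * (\<integral>\<^sup>+ f. ennreal (p (cfg {..<m} f + cfg J y)) \<partial>PP {..<m})) \<partial>PP {..<n})"
  proof (intro nn_integral_cong)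
    fix y assume y: "y \<in> space (PP {..<n})"
    have [measurable]: "(\<lambda>z. z + cfg J y) \<in> measurable N N" using cfg_space[OF y J] by (rule meas_shift)
    show "(\<integral>\<^sup>+ x. ennreal (p (x + cfg J y)) \<partial>P) = (\<Sum>m. ennreal (w m) * (\<integral>\<^sup>+ f. ennreal (p (cfg {..<m} f + cfg J y)) \<partial>PP {..<m}))"
      by (rule nn_P) measurable
  qed
  also have "\<dots> = (\<Sum>m. \<integral>\<^sup>+ y. ennreal (w m) * (\<integral>\<^sup>+ f. ennreal (p (cfg {..<m} f + cfg J y)) \<partial>PP {..<m}) \<partial>PP {..<n})"
    by (rule nn_integral_suminf) measurable
  also have "\<dots> = (\<Sum>m. ennreal (w m) * (emeasure lam B ^ (n - card J) * a (m + card J)))"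
    by (simp add: nn_integral_cmult inner_eq[OF J])
  also have "\<dots> = emeasure lam B ^ (n - card J) * (\<Sum>m. ennreal (w m) * a (m + card J))"
    by (subst ennreal_suminf_cmult[symmetric]) (rule suminf_cong, simp add: mult.left_commute)
  also have "\<dots> < \<infinity>"
    using main_sum_finite[of "card J"] lam_finite
    by (simp add: ennreal_mult_less_top power_less_top_ennreal)
  finally show ?thesis .
qed

end


lemma sum_Pow_Suc:
  "(\<Sum>J\<in>Pow {..<Suc L}. h J) = (\<Sum>J\<in>Pow {..<L}. h (Suc ` J)) + (\<Sum>J\<in>Pow {..<L}. h (insert 0 (Suc ` J)))"
proof -
  have PS: "Pow (Suc ` {..<L}) = (\<lambda>J. Suc ` J) ` Pow {..<L}"
    by (auto simp: subset_image_iff image_iff) blast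
  have inj1: "inj_on (\<lambda>J. Suc ` J) (Pow {..<L})"
    by (rule inj_onI) (simp add: inj_image_eq_iff)
  have inj2: "inj_on (insert 0) (Pow (Suc ` {..<L}))"
  proof (rule inj_onI)
    fix X Y assume XY: "X \<in> Pow (Suc ` {..<L})" "Y \<in> Pow (Suc ` {..<L})" "insert 0 X = insert 0 Y"
    then have "0 \<notin> X" "0 \<notin> Y" by auto
    then show "X = Y" by (metis Diff_insert_absorb XY(3))
  qed
  have "(\<Sum>J\<in>Pow {..<Suc L}. h J) = (\<Sum>J\<in>Pow (Suc ` {..<L}) \<union> insert 0 ` Pow (Suc ` {..<L}). h J)"
    by (simp add: lessThan_Suc_eq_insert_0 Pow_insert)
  also have "\<dots> = (\<Sum>J\<in>Pow (Suc ` {..<L}). h J) + (\<Sum>J\<in>insert 0 ` Pow (Suc ` {..<L}). h J)"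
    by (rule sum.union_disjoint) auto
  also have "(\<Sum>J\<in>insert 0 ` Pow (Suc ` {..<L}). h J) = (\<Sum>J\<in>Pow (Suc ` {..<L}). h (insert 0 J))"
    by (rule sum.reindex[OF inj2, unfolded o_def])
  also have "(\<Sum>J\<in>Pow (Suc ` {..<L}). h (insert 0 J)) = (\<Sum>J\<in>Pow {..<L}. h (insert 0 (Suc ` J)))"
    unfolding PS by (rule sum.reindex[OF inj1, unfolded o_def])
  also have "(\<Sum>J\<in>Pow (Suc ` {..<L}). h J) = (\<Sum>J\<in>Pow {..<L}. h (Suc ` J))"
    unfolding PS by (rule sum.reindex[OF inj1, unfolded o_def])
  finally show ?thesis .
qed

lemma img_Suc: "finite J \<Longrightarrow> image_mset (nth (y # ys)) (mset_set (Suc ` J)) = image_mset (nth ys) (mset_set J)"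
  by (simp add: image_mset_mset_set[symmetric] multiset.map_comp o_def)

lemma img_ins: "finite J \<Longrightarrow> image_mset (nth (y # ys)) (mset_set (insert 0 (Suc ` J))) = add_mset y (image_mset (nth ys) (mset_set J))"
  by (simp add: img_Suc)

lemma diff_op_expand:
  "diff_op F ys x = (\<Sum>J\<in>Pow {..<length ys}. (-1) ^ (length ys - card J) * F (x + image_mset (nth ys) (mset_set J)))"
proof (induct ys arbitrary: x)
  case Nil
  then show ?case by simp
next
  case (Cons y ys)
  let ?L = "length ys"
  have fin: "J \<in> Pow {..<?L} \<Longrightarrow> finite J" for J by (auto intro: finite_subset)
  have cardle: "J \<in> Pow {..<?L} \<Longrightarrow> card J \<le> ?L" for J
    by (metis PowD card_lessThan card_mono finite_lessThan)
  have "diff_op F (y # ys) x = diff_op F ys (x + {#y#}) - diff_op F ys x" by simp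
  also have "\<dots> = (\<Sum>J\<in>Pow {..<?L}. (-1) ^ (?L - card J) * F (x + {#y#} + image_mset (nth ys) (mset_set J)))
      - (\<Sum>J\<in>Pow {..<?L}. (-1) ^ (?L - card J) * F (x + image_mset (nth ys) (mset_set J)))"
    by (simp add: Cons)
  also have "\<dots> = (\<Sum>J\<in>Pow {..<?L}. (-1) ^ (length (y#ys) - card (Suc ` J)) * F (x + image_mset (nth (y#ys)) (mset_set (Suc ` J))))
      + (\<Sum>J\<in>Pow {..<?L}. (-1) ^ (length (y#ys) - card (insert 0 (Suc ` J))) * F (x + image_mset (nth (y#ys)) (mset_set (insert 0 (Suc ` J)))))"
  proof -
    have A: "(\<Sum>J\<in>Pow {..<?L}. (-1) ^ (length (y#ys) - card (Suc ` J)) * F (x + image_mset (nth (y#ys)) (mset_set (Suc ` J))))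
        = - (\<Sum>J\<in>Pow {..<?L}. (-1) ^ (?L - card J) * F (x + image_mset (nth ys) (mset_set J)))"
      unfolding sum_negf[symmetric]
    proof (rule sum.cong[OF refl])
      fix J assume J: "J \<in> Pow {..<?L}"
      have "card (Suc ` J) = card J" by (simp add: card_image)
      moreover have "length (y#ys) - card J = Suc (?L - card J)" using cardle[OF J] by simp
      ultimately show "(-1) ^ (length (y#ys) - card (Suc ` J)) * F (x + image_mset (nth (y#ys)) (mset_set (Suc ` J)))
          = - ((-1) ^ (?L - card J) * F (x + image_mset (nth ys) (mset_set J)))"
        using img_Suc[OF fin[OF J], of y ys] by simp
    qed
    have B: "(\<Sum>J\<in>Pow {..<?L}. (-1) ^ (length (y#ys) - card (insert 0 (Suc ` J))) * F (x + image_mset (nth (y#ys)) (mset_set (insert 0 (Suc ` J)))))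
        = (\<Sum>J\<in>Pow {..<?L}. (-1) ^ (?L - card J) * F (x + {#y#} + image_mset (nth ys) (mset_set J)))"
    proof (rule sum.cong[OF refl])
      fix J assume J: "J \<in> Pow {..<?L}"
      have "card (insert 0 (Suc ` J)) = Suc (card J)" using fin[OF J] by (simp add: card_image)
      then show "(-1) ^ (length (y#ys) - card (insert 0 (Suc ` J))) * F (x + image_mset (nth (y#ys)) (mset_set (insert 0 (Suc ` J))))
          = (-1) ^ (?L - card J) * F (x + {#y#} + image_mset (nth ys) (mset_set J))"
        using img_ins[OF fin[OF J], of y ys] by (simp add: add.assoc)
    qed
    show ?thesis unfolding A B by simp
  qed
  also have "\<dots> = (\<Sum>J\<in>Pow {..<length (y#ys)}. (-1) ^ (length (y#ys) - card J) * F (x + image_mset (nth (y#ys)) (mset_set J)))"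
    by (simp only: length_Cons sum_Pow_Suc)
  finally show ?case .
qed



theorem lemma2:
  fixes B :: "'a::euclidean_space set"
    and lam :: "'a measure"
    and p :: "'a multiset \<Rightarrow> real"
    and n :: nat
  assumes B_borel: "B \<in> sets borel"
    and B_bounded: "bounded B"
    and B_pos: "emeasure lborel B > 0"
    and lam_space: "space lam = B"
    and lam_sets: "sets lam = sets (restrict_space borel B)"
    and lam_finite: "emeasure lam B < \<infinity>"
    and lam_atomless: "\<And>y. y \<in> B \<Longrightarrow> emeasure lam {y} = 0"
    and p_meas: "p \<in> borel_measurable (config_space B)"
    and p_nonneg: "\<And>x. x \<in> space (config_space B) \<Longrightarrow> p x \<ge> 0"
    and p_int: "integrable (poisson_distr B lam) p"
    and p_norm: "(\<integral>x. p x \<partial>poisson_distr B lam) = 1"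
    and p_hered: "\<And>x x'. x \<in> space (config_space B) \<Longrightarrow> p x > 0 \<Longrightarrow> x' \<subseteq># x \<Longrightarrow> p x' > 0"
    and p_L2: "integrable (poisson_distr B lam) (\<lambda>x. (p x)\<^sup>2)"
  shows "AE y in PiM {..<n} (\<lambda>_. lam).
           T_op B lam p n y =
             (\<Sum>J\<in>Pow {..<n}. (-1) ^ (n - card J) *
                (\<integral>x. cond_int p (image_mset y (mset_set J)) x
                    \<partial>density (poisson_distr B lam) (\<lambda>x. ennreal (p x))))"
proof -
  interpret pp2 B lam p
    by unfold_locales (use B_borel lam_space lam_sets lam_finite p_meas p_nonneg p_L2 in auto)
  have AE1: "AE y in PP {..<n}. \<forall>J\<in>Pow {..<n}. (\<integral>\<^sup>+ x. ennreal (p (x + cfg J y)) \<partial>P) \<noteq> \<infinity>"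
  proof (rule AE_finite_allI)
    fix J assume "J \<in> Pow {..<n}"
    then have J: "J \<subseteq> {..<n}" by auto
    show "AE y in PP {..<n}. (\<integral>\<^sup>+ x. ennreal (p (x + cfg J y)) \<partial>P) \<noteq> \<infinity>"
      using Phi_int[OF J] by (intro nn_integral_noteq_infinite[OF Phi_meas[OF J]]) simp
  qed simp
  show ?thesis
    using AE1
  proof (rule AE_mp[OF _ AE_I2[OF impI]])
    fix y assume y: "y \<in> space (PP {..<n})"
      and fin: "\<forall>J\<in>Pow {..<n}. (\<integral>\<^sup>+ x. ennreal (p (x + cfg J y)) \<partial>P) \<noteq> \<infinity>"
    have uN: "J \<subseteq> {..<n} \<Longrightarrow> cfg J y \<in> space N" for J using cfg_space[OF y] by simp
    have mJ[measurable]: "J \<subseteq> {..<n} \<Longrightarrow> (\<lambda>z. z + cfg J y) \<in> measurable N N" for J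
      using uN by (rule meas_shift)
    have xu: "x \<in> space P \<Longrightarrow> J \<subseteq> {..<n} \<Longrightarrow> x + cfg J y \<in> space N" for x J
      using uN[of J] by (auto simp: space_P space_config configs_def)
    have integ: "integrable P (\<lambda>x. p (x + cfg J y))" if J: "J \<subseteq> {..<n}" for J
    proof (rule integrableI_bounded)
      show "(\<lambda>x. p (x + cfg J y)) \<in> borel_measurable P" using J by measurable
      have "(\<integral>\<^sup>+ x. ennreal (norm (p (x + cfg J y))) \<partial>P) = (\<integral>\<^sup>+ x. ennreal (p (x + cfg J y)) \<partial>P)"
        by (intro nn_integral_cong) (use xu[OF _ J] p_nonneg in simp)
      also have "\<dots> < \<infinity>" using fin J by (simp add: less_top)
      finally show "(\<integral>\<^sup>+ x. ennreal (norm (p (x + cfg J y))) \<partial>P) < \<infinity>" .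
    qed
    have dens: "(\<integral>x. cond_int p (cfg J y) x \<partial>density P (\<lambda>x. ennreal (p x))) = (\<integral>x. p (x + cfg J y) \<partial>P)"
      if J: "J \<subseteq> {..<n}" for J
    proof -
      have "(\<integral>x. cond_int p (cfg J y) x \<partial>density P (\<lambda>x. ennreal (p x))) = (\<integral>x. p x *\<^sub>R cond_int p (cfg J y) x \<partial>P)"
        by (rule integral_density) (use J p_nonneg in \<open>auto simp: cond_int_def space_P space_config\<close>)
      also have "\<dots> = (\<integral>x. p (x + cfg J y) \<partial>P)"
      proof (rule Bochner_Integration.integral_cong[OF refl])
        fix x assume x: "x \<in> space P"
        then have x': "x \<in> space (config_space B)" by (simp add: space_P space_config)
        have px: "0 \<le> p x" using p_nonneg x' by simp
        have pxu: "0 \<le> p (x + cfg J y)" using p_nonneg xu[OF x J] by simp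
        show "p x *\<^sub>R cond_int p (cfg J y) x = p (x + cfg J y)"
        proof (cases "p x > 0")
          case True then show ?thesis by (simp add: cond_int_def)
        next
          case False
          then have "p x = 0" using px by simp
          moreover have "\<not> p (x + cfg J y) > 0"
            using p_hered[OF xu[OF x J], of x] False by auto
          ultimately show ?thesis using pxu by (simp add: cond_int_def)
        qed
      qed
      finally show ?thesis .
    qed
    have "T_op B lam p n y = (\<integral>x. diff_op p (map y [0..<n]) x \<partial>P)" by (simp add: T_op_def)
    also have "\<dots> = (\<integral>x. (\<Sum>J\<in>Pow {..<n}. (-1) ^ (n - card J) * p (x + cfg J y)) \<partial>P)"
    proof (rule Bochner_Integration.integral_cong[OF refl])
      fix x
      have "image_mset (nth (map y [0..<n])) (mset_set J) = cfg J y" if "J \<in> Pow {..<n}" for J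
        unfolding cfg_def using that finite_subset[of J "{..<n}"] by (intro image_mset_cong) auto
      then show "diff_op p (map y [0..<n]) x = (\<Sum>J\<in>Pow {..<n}. (-1) ^ (n - card J) * p (x + cfg J y))"
        by (simp add: diff_op_expand)
    qed
    also have "\<dots> = (\<Sum>J\<in>Pow {..<n}. (\<integral>x. (-1) ^ (n - card J) * p (x + cfg J y) \<partial>P))"
      by (rule Bochner_Integration.integral_sum) (auto intro!: integ)
    also have "\<dots> = (\<Sum>J\<in>Pow {..<n}. (-1) ^ (n - card J) * (\<integral>x. p (x + cfg J y) \<partial>P))"
      by simp
    also have "\<dots> = (\<Sum>J\<in>Pow {..<n}. (-1) ^ (n - card J) *
                (\<integral>x. cond_int p (image_mset y (mset_set J)) x \<partial>density P (\<lambda>x. ennreal (p x))))"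
      by (intro sum.cong refl) (simp add: dens cfg_def[symmetric])
    finally show "T_op B lam p n y = (\<Sum>J\<in>Pow {..<n}. (-1) ^ (n - card J) *
                (\<integral>x. cond_int p (image_mset y (mset_set J)) x \<partial>density P (\<lambda>x. ennreal (p x))))" .
  qed
qed

end
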